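(* Let $M=(a_{ij})$ be a matrix game with entries in $[0,1]$ and value $v$, and let $\epsilon,c\ge0$. Let $M(t)$ be a corresponding repeated game with error $c\epsilon$ in which both players are $\epsilon$-Hannan consistent (with respect to the observed payoffs). Then almost surely \[v-(c+1)\epsilon\le\liminf_{t\to\infty}g(t)\le\limsup_{t\to\infty}g(t)\le v+(c+1)\epsilon,\] \[v-2(c+1)\epsilon\le\liminf_{t\to\infty}u(\hat\sigma_1(t),br)\le\limsup_{t\to\infty}u(br,\hat\sigma_2(t))\le v+2(c+1)\epsilon.\]
   Context: Repeated game with error $e$: at rounds $t=1,2,\dots$ player 1 chooses a row $i(t)$ and player 2 a column $j(t)$, and they observe a random payoff $a_{i(t)j(t)}(t)\in[0,1]$ whose distribution may depend on all previous action choices; it is required that almost surely there is $t_0$ with $|a_{ij}(t)-a_{ij}|<e$ for all $i,j$ and all $t\ge t_0$. Player 1 receives reward $a_{i(t)j(t)}(t)$ and player 2 the reward $1-a_{i(t)j(t)}(t)$. A player is $\epsilon$-Hannan consistent if its average external regret $r(t)=\frac1t(\max_k\sum_{s\le t}x_k(s)-\sum_{s\le t}x_{k(s)}(s))$ with respect to its observed rewards (where $x_k(s)$ is the reward it would have observed at round $s$ by playing $k$) satisfies $\limsup_t r(t)\le\epsilon$ a.s. Here $g(t)=\frac1t\sum_{s=1}^t a_{i(s)j(s)}(s)$; empirical frequencies $\hat\sigma_1(t)(i)=t_i/t$, $\hat\sigma_2(t)(j)=t_j/t$ with $t_i$ ($t_j$) the number of rounds $s\le t$ with $i(s)=i$ ($j(s)=j$).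 Utilities refer to the exact matrix: $u(\sigma_1,\sigma_2)=\sigma_1M\sigma_2$, $u(br,\sigma_2)=\max_{\sigma_1'}\sigma_1'M\sigma_2$, $u(\sigma_1,br)=\min_{\sigma_2'}\sigma_1M\sigma_2'$. *)

theory Defs
  imports "HOL-Probability.Probability"
begin

definition mixed :: "('a::finite \<Rightarrow> real) set" where
  "mixed = {\<sigma>. (\<forall>x. 0 \<le> \<sigma> x) \<and> (\<Sum>x\<in>UNIV. \<sigma> x) = 1}"

definition util :: "('r::finite \<Rightarrow> 'c::finite \<Rightarrow> real) \<Rightarrow> ('r \<Rightarrow> real) \<Rightarrow> ('c \<Rightarrow> real) \<Rightarrow> real" where
  "util M \<sigma>1 \<sigma>2 = (\<Sum>i\<in>UNIV. \<Sum>j\<in>UNIV. \<sigma>1 i * M i j * \<sigma>2 j)"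

definition util_br1 :: "('r::finite \<Rightarrow> 'c::finite \<Rightarrow> real) \<Rightarrow> ('c \<Rightarrow> real) \<Rightarrow> real" where
  "util_br1 M \<sigma>2 = (SUP \<sigma>1\<in>mixed. util M \<sigma>1 \<sigma>2)"

definition util_br2 :: "('r::finite \<Rightarrow> 'c::finite \<Rightarrow> real) \<Rightarrow> ('r \<Rightarrow> real) \<Rightarrow> real" where
  "util_br2 M \<sigma>1 = (INF \<sigma>2\<in>mixed. util M \<sigma>1 \<sigma>2)"

text \<open>The value of the matrix game (max-min value; equals the min-max value by von Neumann).\<close>
definition game_value :: "('r::finite \<Rightarrow> 'c::finite \<Rightarrow> real) \<Rightarrow> real" where
  "game_value M = (SUP \<sigma>1\<in>mixed. util_br2 M \<sigma>1)"

text \<open>Along one realisation: a s i j is the payoff matrix at round s, ii s / jj s the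
  actions chosen at round s (rounds are s = 1, 2, ...).\<close>

definition avg_payoff :: "(nat \<Rightarrow> 'r \<Rightarrow> 'c \<Rightarrow> real) \<Rightarrow> (nat \<Rightarrow> 'r) \<Rightarrow> (nat \<Rightarrow> 'c) \<Rightarrow> nat \<Rightarrow> real" where
  "avg_payoff a ii jj t = (\<Sum>s=1..t. a s (ii s) (jj s)) / real t"

definition emp_freq :: "(nat \<Rightarrow> 'a) \<Rightarrow> nat \<Rightarrow> 'a \<Rightarrow> real" where
  "emp_freq ii t x = real (card {s\<in>{1..t}. ii s = x}) / real t"

definition regret1 :: "(nat \<Rightarrow> 'r::finite \<Rightarrow> 'c \<Rightarrow> real) \<Rightarrow> (nat \<Rightarrow> 'r) \<Rightarrow> (nat \<Rightarrow> 'c) \<Rightarrow> nat \<Rightarrow> real" where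
  "regret1 a ii jj t =
     (Max (range (\<lambda>k. \<Sum>s=1..t. a s k (jj s))) - (\<Sum>s=1..t. a s (ii s) (jj s))) / real t"

definition regret2 :: "(nat \<Rightarrow> 'r \<Rightarrow> 'c::finite \<Rightarrow> real) \<Rightarrow> (nat \<Rightarrow> 'r) \<Rightarrow> (nat \<Rightarrow> 'c) \<Rightarrow> nat \<Rightarrow> real" where
  "regret2 a ii jj t =
     (Max (range (\<lambda>l. \<Sum>s=1..t. 1 - a s (ii s) l)) - (\<Sum>s=1..t. 1 - a s (ii s) (jj s))) / real t"

end

theory Submission
  imports Defs
begin

lemma err_sum_aux:
  fixes f :: "nat \<Rightarrow> real"
  assumes "\<And>s. \<bar>f s\<bar> \<le> 1" "\<And>s. s \<ge> K \<Longrightarrow> \<bar>f s\<bar> < \<delta>" "0 \<le> \<delta>"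
  shows "\<bar>\<Sum>s=1..t. f s\<bar> \<le> real t * \<delta> + real (min t K)"
proof (induction t)
  case 0 then show ?case by simp
next
  case (Suc t)
  have e: "(\<Sum>s=1..Suc t. f s) = (\<Sum>s=1..t. f s) + f (Suc t)" by simp
  show ?case
  proof (cases "Suc t \<ge> K")
    case True
    then have "\<bar>f (Suc t)\<bar> < \<delta>" using assms by auto
    moreover have "real (min t K) \<le> real (min (Suc t) K)" by simp
    moreover have "\<bar>(\<Sum>s=1..Suc t. f s)\<bar> \<le> \<bar>\<Sum>s=1..t. f s\<bar> + \<bar>f (Suc t)\<bar>"
      unfolding e by (rule abs_triangle_ineq)
    ultimately show ?thesis using Suc.IH by (simp add: distrib_right)
  next
    case False
    then have "min (Suc t) K = Suc (min t K)" by simp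
    moreover have "\<bar>(\<Sum>s=1..Suc t. f s)\<bar> \<le> \<bar>\<Sum>s=1..t. f s\<bar> + \<bar>f (Suc t)\<bar>"
      unfolding e by (rule abs_triangle_ineq)
    ultimately show ?thesis using Suc.IH assms(1)[of "Suc t"] assms(3) by (simp add: distrib_right)
  qed
qed

lemma err_sum:
  fixes f :: "nat \<Rightarrow> real"
  assumes "\<And>s. \<bar>f s\<bar> \<le> 1" "\<And>s. s \<ge> K \<Longrightarrow> \<bar>f s\<bar> < \<delta>" "0 \<le> \<delta>"
  shows "\<bar>\<Sum>s=1..t. f s\<bar> \<le> real t * \<delta> + real K"
  proof -
  have "real (min t K) \<le> real K" by simp
  moreover have "\<bar>\<Sum>s=1..t. f s\<bar> \<le> real t * \<delta> + real (min t K)"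
    by (rule err_sum_aux) (use assms in auto)
  ultimately show ?thesis by linarith
qed

lemma count_sum:
  fixes w :: "'a::finite \<Rightarrow> real" and f :: "nat \<Rightarrow> 'a"
  assumes "finite S"
  shows "(\<Sum>x\<in>UNIV. w x * real (card {s\<in>S. f s = x})) = (\<Sum>s\<in>S. w (f s))"
proof -
  have "(\<Sum>s\<in>S. w (f s)) = (\<Sum>s\<in>S. \<Sum>x\<in>UNIV. if f s = x then w x else 0)"
    by simp
  also have "\<dots> = (\<Sum>x\<in>UNIV. \<Sum>s\<in>S. if f s = x then w x else 0)"
    by (rule sum.swap)
  also have "\<dots> = (\<Sum>x\<in>UNIV. w x * real (card {s\<in>S. f s = x}))"
    using assms by (simp add: sum.If_cases Int_def mult.commute)
  finally show ?thesis by simp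
qed

lemma emp_freq_mixed:
  fixes ii :: "nat \<Rightarrow> 'a::finite"
  assumes "t \<ge> 1"
  shows "emp_freq ii t \<in> mixed"
proof -
  have "(\<Sum>x\<in>UNIV. 1 * real (card {s\<in>{1..t}. ii s = x})) = real t"
    using count_sum[of "{1..t}" "\<lambda>_. 1" ii] by simp
  then show ?thesis using assms unfolding mixed_def emp_freq_def
    by (simp add: sum_divide_distrib[symmetric])
qed

lemma emp_freq_sum:
  fixes ii :: "nat \<Rightarrow> 'a::finite"
  assumes "t \<ge> 1"
  shows "(\<Sum>x\<in>UNIV. w x * emp_freq ii t x) = (\<Sum>s=1..t. w (ii s)) / real t"
  using count_sum[of "{1..t}" w ii] unfolding emp_freq_def
  by (simp add: sum_divide_distrib[symmetric])

lemma pure_mixed: "(\<lambda>x. if x = k then 1 else 0 :: real) \<in> mixed"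
  unfolding mixed_def by simp

lemma mixed_nonempty: "mixed \<noteq> {}"
  using pure_mixed by blast

lemma util_rows: "util M s1 s2 = (\<Sum>i\<in>UNIV. s1 i * (\<Sum>j\<in>UNIV. M i j * s2 j))"
  unfolding util_def by (simp add: sum_distrib_left mult.assoc)

lemma util_cols: "util M s1 s2 = (\<Sum>j\<in>UNIV. s2 j * (\<Sum>i\<in>UNIV. s1 i * M i j))"
  unfolding util_def by (subst sum.swap) (simp add: sum_distrib_left mult.assoc mult.commute mult.left_commute)

lemma convex_le:
  fixes s :: "'a::finite \<Rightarrow> real"
  assumes "s \<in> mixed" "\<And>i. h i \<le> B"
  shows "(\<Sum>i\<in>UNIV. s i * h i) \<le> B"
proof -
  have "(\<Sum>i\<in>UNIV. s i * h i) \<le> (\<Sum>i\<in>UNIV. s i * B)"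
    using assms by (intro sum_mono mult_left_mono) (auto simp: mixed_def)
  also have "\<dots> = B" using assms by (simp add: mixed_def sum_distrib_right[symmetric])
  finally show ?thesis .
qed

lemma convex_ge:
  fixes s :: "'a::finite \<Rightarrow> real"
  assumes "s \<in> mixed" "\<And>i. B \<le> h i"
  shows "B \<le> (\<Sum>i\<in>UNIV. s i * h i)"
proof -
  have "(\<Sum>i\<in>UNIV. s i * B) \<le> (\<Sum>i\<in>UNIV. s i * h i)"
    using assms by (intro sum_mono mult_left_mono) (auto simp: mixed_def)
  moreover have "(\<Sum>i\<in>UNIV. s i * B) = B" using assms by (simp add: mixed_def sum_distrib_right[symmetric])
  ultimately show ?thesis by simp
qed

lemma util_bounds:
  fixes M :: "'r::finite \<Rightarrow> 'c::finite \<Rightarrow> real"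
  assumes M: "\<forall>i j. 0 \<le> M i j \<and> M i j \<le> 1" and "s1 \<in> mixed" "s2 \<in> mixed"
  shows "0 \<le> util M s1 s2 \<and> util M s1 s2 \<le> 1"
proof -
  have r: "0 \<le> (\<Sum>j\<in>UNIV. M i j * s2 j) \<and> (\<Sum>j\<in>UNIV. M i j * s2 j) \<le> 1" for i
  proof -
    have "(\<Sum>j\<in>UNIV. s2 j * M i j) \<le> 1" by (rule convex_le) (use assms in auto)
    moreover have "0 \<le> (\<Sum>j\<in>UNIV. s2 j * M i j)" by (rule convex_ge) (use assms in auto)
    ultimately show ?thesis by (simp add: mult.commute)
  qed
  have "util M s1 s2 \<le> 1" unfolding util_rows by (rule convex_le) (use assms r in auto)
  moreover have "0 \<le> util M s1 s2" unfolding util_rows by (rule convex_ge) (use assms r in auto)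
  ultimately show ?thesis by simp
qed

lemma br2_le_util:
  fixes M :: "'r::finite \<Rightarrow> 'c::finite \<Rightarrow> real"
  assumes M: "\<forall>i j. 0 \<le> M i j \<and> M i j \<le> 1" and "s1 \<in> mixed" "s2 \<in> mixed"
  shows "util_br2 M s1 \<le> util M s1 s2"
  unfolding util_br2_def
  by (rule cINF_lower) (use assms util_bounds[OF M assms(2)] in \<open>auto intro!: bdd_belowI2[where m=0]\<close>)

lemma util_le_br1:
  fixes M :: "'r::finite \<Rightarrow> 'c::finite \<Rightarrow> real"
  assumes M: "\<forall>i j. 0 \<le> M i j \<and> M i j \<le> 1" and "s1 \<in> mixed" "s2 \<in> mixed"
  shows "util M s1 s2 \<le> util_br1 M s2"
  unfolding util_br1_def
  by (rule cSUP_upper) (use assms util_bounds[OF M _ assms(3)] in \<open>auto intro!: bdd_aboveI2[where M=1]\<close>)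

lemma br2_le_value:
  fixes M :: "'r::finite \<Rightarrow> 'c::finite \<Rightarrow> real"
  assumes M: "\<forall>i j. 0 \<le> M i j \<and> M i j \<le> 1" and "s1 \<in> mixed"
  shows "util_br2 M s1 \<le> game_value M"
proof -
  obtain s0 :: "'c \<Rightarrow> real" where s0: "s0 \<in> mixed" using mixed_nonempty by blast
  have "util_br2 M s \<le> 1" if "s \<in> mixed" for s
    using br2_le_util[OF M that s0] util_bounds[OF M that s0] by linarith
  then show ?thesis unfolding game_value_def
    by (intro cSUP_upper assms) (auto intro!: bdd_aboveI2[where M=1])
qed

lemma value_le_br1:
  fixes M :: "'r::finite \<Rightarrow> 'c::finite \<Rightarrow> real"
  assumes M: "\<forall>i j. 0 \<le> M i j \<and> M i j \<le> 1" and "s2 \<in> mixed"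
  shows "game_value M \<le> util_br1 M s2"
  unfolding game_value_def
proof (rule cSUP_least)
  show "(mixed :: ('r \<Rightarrow> real) set) \<noteq> {}" by (rule mixed_nonempty)
  fix s1 :: "'r \<Rightarrow> real" assume "s1 \<in> mixed"
  then show "util_br2 M s1 \<le> util_br1 M s2"
    using br2_le_util[OF M \<open>s1 \<in> mixed\<close> assms(2)] util_le_br1[OF M \<open>s1 \<in> mixed\<close> assms(2)] by linarith
qed

lemma br1_le_row:
  fixes M :: "'r::finite \<Rightarrow> 'c::finite \<Rightarrow> real"
  shows "\<exists>k. util_br1 M s2 \<le> (\<Sum>j\<in>UNIV. M k j * s2 j)"
proof -
  define h where "h k = (\<Sum>j\<in>UNIV. M k j * s2 j)" for k
  have "Max (range h) \<in> range h" by (rule Max_in) auto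
  then obtain k where k: "h k = Max (range h)" by (metis rangeE)
  have hk: "h i \<le> h k" for i unfolding k by (rule Max_ge) auto
  have "util_br1 M s2 \<le> h k" unfolding util_br1_def
  proof (rule cSUP_least)
    show "(mixed :: ('r \<Rightarrow> real) set) \<noteq> {}" by (rule mixed_nonempty)
    fix s1 :: "'r \<Rightarrow> real" assume "s1 \<in> mixed"
    then show "util M s1 s2 \<le> h k" unfolding util_rows h_def[symmetric]
      by (rule convex_le) (rule hk)
  qed
  then show ?thesis unfolding h_def by blast
qed

lemma br2_ge_col:
  fixes M :: "'r::finite \<Rightarrow> 'c::finite \<Rightarrow> real"
  shows "\<exists>l. (\<Sum>i\<in>UNIV. s1 i * M i l) \<le> util_br2 M s1"
proof -
  define h where "h l = (\<Sum>i\<in>UNIV. s1 i * M i l)" for l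
  have "Min (range h) \<in> range h" by (rule Min_in) auto
  then obtain l where l: "h l = Min (range h)" by (metis rangeE)
  have hl: "h l \<le> h i" for i unfolding l by (rule Min_le) auto
  have "h l \<le> util_br2 M s1" unfolding util_br2_def
  proof (rule cINF_greatest)
    show "(mixed :: ('c \<Rightarrow> real) set) \<noteq> {}" by (rule mixed_nonempty)
    fix s2 :: "'c \<Rightarrow> real" assume "s2 \<in> mixed"
    then show "h l \<le> util M s1 s2" unfolding util_cols h_def[symmetric]
      by (rule convex_ge) (rule hl)
  qed
  then show ?thesis unfolding h_def by blast
qed


lemma liminf_bound:
  fixes y x1 x2 r :: "nat \<Rightarrow> real"
  assumes h1: "limsup (\<lambda>t. ereal (x1 t)) \<le> ereal e1" and h2: "limsup (\<lambda>t. ereal (x2 t)) \<le> ereal e2"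
    and hr: "r \<longlonglongrightarrow> 0" and ev: "eventually (\<lambda>t. C - x1 t - x2 t - r t \<le> y t) sequentially"
  shows "ereal (C - e1 - e2) \<le> liminf (\<lambda>t. ereal (y t))"
proof (subst le_Liminf_iff, intro allI impI)
  fix z assume "z < ereal (C - e1 - e2)"
  then obtain q where q: "z < ereal q" "ereal q < ereal (C-e1-e2)" using ereal_dense2 by blast
  define d where "d = (C - e1 - e2 - q)/3"
  have d: "d > 0" using q(2) unfolding d_def by simp
  have "limsup (\<lambda>t. ereal (x1 t)) < ereal (e1 + d)"
  proof -
    have "ereal e1 < ereal (e1 + d)" using d by simp
    then show ?thesis using h1 by (rule le_less_trans[rotated])
  qed
  then have e1: "eventually (\<lambda>t. ereal (x1 t) < ereal (e1+d)) sequentially" by (rule Limsup_lessD)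
  have "limsup (\<lambda>t. ereal (x2 t)) < ereal (e2 + d)"
  proof -
    have "ereal e2 < ereal (e2 + d)" using d by simp
    then show ?thesis using h2 by (rule le_less_trans[rotated])
  qed
  then have e2: "eventually (\<lambda>t. ereal (x2 t) < ereal (e2+d)) sequentially" by (rule Limsup_lessD)
  have e3: "eventually (\<lambda>t. r t < d) sequentially" using hr d by (rule order_tendstoD)
  show "eventually (\<lambda>t. z < ereal (y t)) sequentially"
    using e1 e2 e3 ev
  proof eventually_elim
    case (elim t)
    then have "q < y t" unfolding d_def by (simp add: field_simps)
    then have "ereal q < ereal (y t)" by simp
    then show ?case using q(1) by (rule less_trans[rotated])
  qed
qed

lemma limsup_bound:
  fixes y x1 x2 r :: "nat \<Rightarrow> real"
  assumes h1: "limsup (\<lambda>t. ereal (x1 t)) \<le> ereal e1" and h2: "limsup (\<lambda>t. ereal (x2 t)) \<le> ereal e2"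
    and hr: "r \<longlonglongrightarrow> 0" and ev: "eventually (\<lambda>t. y t \<le> C + x1 t + x2 t + r t) sequentially"
  shows "limsup (\<lambda>t. ereal (y t)) \<le> ereal (C + e1 + e2)"
proof -
  have ev': "eventually (\<lambda>t. - C - x1 t - x2 t - r t \<le> - y t) sequentially"
    using ev by eventually_elim linarith
  have 1: "ereal (- C - e1 - e2) \<le> liminf (\<lambda>t. ereal (- y t))"
    by (rule liminf_bound[OF h1 h2 hr ev'])
  have f: "(\<lambda>t. ereal (- y t)) = (\<lambda>t. - ereal (y t))" by simp
  have 2: "liminf (\<lambda>t. ereal (- y t)) = - limsup (\<lambda>t. ereal (y t))"
    unfolding f by (rule ereal_Liminf_uminus)
  have 3: "ereal (- C - e1 - e2) = - ereal (C + e1 + e2)" by simp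
  have "- ereal (C + e1 + e2) \<le> - limsup (\<lambda>t. ereal (y t))"
    using 1 unfolding 2 3 .
  then show ?thesis by (simp only: ereal_minus_le_minus)
qed

lemma bound_hi:
  fixes M :: "'r::finite \<Rightarrow> 'c::finite \<Rightarrow> real" and a :: "nat \<Rightarrow> 'r \<Rightarrow> 'c \<Rightarrow> real"
  assumes M: "\<forall>i j. 0 \<le> M i j \<and> M i j \<le> 1" and ar: "\<forall>t i j. 0 \<le> a t i j \<and> a t i j \<le> 1"
    and d: "0 \<le> \<delta>" and K: "\<forall>t\<ge>K. \<forall>i j. \<bar>a t i j - M i j\<bar> < \<delta>" and t: "t \<ge> 1"
  shows "util_br1 M (emp_freq jj t) \<le> regret1 a ii jj t + avg_payoff a ii jj t + \<delta> + real K / real t"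
proof -
  obtain k where k: "util_br1 M (emp_freq jj t) \<le> (\<Sum>j\<in>UNIV. M k j * emp_freq jj t j)"
    using br1_le_row by blast
  have row: "(\<Sum>j\<in>UNIV. M k j * emp_freq jj t j) = (\<Sum>s=1..t. M k (jj s)) / real t"
    by (rule emp_freq_sum[OF t])
  have "\<bar>\<Sum>s=1..t. M k (jj s) - a s k (jj s)\<bar> \<le> real t * \<delta> + real K"
  proof (rule err_sum)
    fix s
    have "0 \<le> M k (jj s) \<and> M k (jj s) \<le> 1" "0 \<le> a s k (jj s) \<and> a s k (jj s) \<le> 1"
      using M ar by blast+
    then show "\<bar>M k (jj s) - a s k (jj s)\<bar> \<le> 1" by (simp add: abs_le_iff)
  next
    fix s assume "K \<le> s" then show "\<bar>M k (jj s) - a s k (jj s)\<bar> < \<delta>" using K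
      by (metis abs_minus_commute)
  qed (rule d)
  then have e: "(\<Sum>s=1..t. M k (jj s)) \<le> (\<Sum>s=1..t. a s k (jj s)) + real t * \<delta> + real K"
    by (simp add: sum_subtractf)
  have mx: "(\<Sum>s=1..t. a s k (jj s)) \<le> Max (range (\<lambda>k. \<Sum>s=1..t. a s k (jj s)))"
    by (rule Max_ge) auto
  have tp: "real t > 0" using t by simp
  have "real t * util_br1 M (emp_freq jj t) \<le> (\<Sum>s=1..t. M k (jj s))"
    using k row tp by (simp add: field_simps)
  also have "\<dots> \<le> Max (range (\<lambda>k. \<Sum>s=1..t. a s k (jj s))) + real t * \<delta> + real K"
    using e mx by linarith
  also have "\<dots> = real t * (regret1 a ii jj t + avg_payoff a ii jj t + \<delta> + real K / real t)"
    using tp unfolding regret1_def avg_payoff_def by (simp add: field_simps)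
  finally show ?thesis using tp by simp
qed

lemma bound_lo:
  fixes M :: "'r::finite \<Rightarrow> 'c::finite \<Rightarrow> real" and a :: "nat \<Rightarrow> 'r \<Rightarrow> 'c \<Rightarrow> real"
  assumes M: "\<forall>i j. 0 \<le> M i j \<and> M i j \<le> 1" and ar: "\<forall>t i j. 0 \<le> a t i j \<and> a t i j \<le> 1"
    and d: "0 \<le> \<delta>" and K: "\<forall>t\<ge>K. \<forall>i j. \<bar>a t i j - M i j\<bar> < \<delta>" and t: "t \<ge> 1"
  shows "avg_payoff a ii jj t \<le> regret2 a ii jj t + util_br2 M (emp_freq ii t) + \<delta> + real K / real t"
proof -
  obtain l where l: "(\<Sum>i\<in>UNIV. emp_freq ii t i * M i l) \<le> util_br2 M (emp_freq ii t)"
    using br2_ge_col by blast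
  have col: "(\<Sum>i\<in>UNIV. emp_freq ii t i * M i l) = (\<Sum>s=1..t. M (ii s) l) / real t"
    using emp_freq_sum[OF t, of "\<lambda>i. M i l" ii] by (simp add: mult.commute)
  have "\<bar>\<Sum>s=1..t. a s (ii s) l - M (ii s) l\<bar> \<le> real t * \<delta> + real K"
  proof (rule err_sum)
    fix s
    have "0 \<le> M (ii s) l \<and> M (ii s) l \<le> 1" "0 \<le> a s (ii s) l \<and> a s (ii s) l \<le> 1"
      using M ar by blast+
    then show "\<bar>a s (ii s) l - M (ii s) l\<bar> \<le> 1" by (simp add: abs_le_iff)
  next
    fix s assume "K \<le> s" then show "\<bar>a s (ii s) l - M (ii s) l\<bar> < \<delta>" using K
      by blast
  qed (rule d)
  then have e: "(\<Sum>s=1..t. a s (ii s) l) \<le> (\<Sum>s=1..t. M (ii s) l) + real t * \<delta> + real K"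
    by (simp add: sum_subtractf)
  have mx: "(\<Sum>s=1..t. 1 - a s (ii s) l) \<le> Max (range (\<lambda>l. \<Sum>s=1..t. 1 - a s (ii s) l))"
    by (rule Max_ge) auto
  have s1: "(\<Sum>s=1..t. 1 - a s (ii s) l) = real t - (\<Sum>s=1..t. a s (ii s) l)"
    by (simp add: sum_subtractf)
  have s2: "(\<Sum>s=1..t. 1 - a s (ii s) (jj s)) = real t - (\<Sum>s=1..t. a s (ii s) (jj s))"
    by (simp add: sum_subtractf)
  have tp: "real t > 0" using t by simp
  have r2: "real t * regret2 a ii jj t = Max (range (\<lambda>l. \<Sum>s=1..t. 1 - a s (ii s) l)) - (real t - (\<Sum>s=1..t. a s (ii s) (jj s)))"
    using tp unfolding regret2_def s2 by simp
  have "real t * avg_payoff a ii jj t = (\<Sum>s=1..t. a s (ii s) (jj s))"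
    using tp unfolding avg_payoff_def by simp
  also have "\<dots> \<le> real t * regret2 a ii jj t + (\<Sum>s=1..t. a s (ii s) l)"
    using r2 mx s1 by linarith
  also have "\<dots> \<le> real t * regret2 a ii jj t + real t * util_br2 M (emp_freq ii t) + real t * \<delta> + real K"
  proof -
    have "(\<Sum>s=1..t. M (ii s) l) \<le> real t * util_br2 M (emp_freq ii t)"
    proof -
      have "(\<Sum>s=1..t. M (ii s) l) = real t * (\<Sum>i\<in>UNIV. emp_freq ii t i * M i l)"
        using col tp by simp
      also have "\<dots> \<le> real t * util_br2 M (emp_freq ii t)"
        using l tp by (intro mult_left_mono) auto
      finally show ?thesis .
    qed
    then show ?thesis using e by linarith
  qed
  also have "\<dots> = real t * (regret2 a ii jj t + util_br2 M (emp_freq ii t) + \<delta> + real K / real t)"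
    using tp by (simp add: field_simps)
  finally show ?thesis using tp by simp
qed


lemma det:
  fixes M :: "'r::finite \<Rightarrow> 'c::finite \<Rightarrow> real" and a :: "nat \<Rightarrow> 'r \<Rightarrow> 'c \<Rightarrow> real"
    and ii :: "nat \<Rightarrow> 'r" and jj :: "nat \<Rightarrow> 'c"
  assumes M: "\<forall>i j. 0 \<le> M i j \<and> M i j \<le> 1" and ar: "\<forall>t i j. 0 \<le> a t i j \<and> a t i j \<le> 1"
    and e0: "0 \<le> \<epsilon>" and c0: "0 \<le> c"
    and K: "\<forall>t\<ge>K. \<forall>i j. \<bar>a t i j - M i j\<bar> < c * \<epsilon>"
    and h1: "limsup (\<lambda>t. ereal (regret1 a ii jj t)) \<le> ereal \<epsilon>"
    and h2: "limsup (\<lambda>t. ereal (regret2 a ii jj t)) \<le> ereal \<epsilon>"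
  shows "(let g = (\<lambda>t. ereal (avg_payoff a ii jj t));
         v = game_value M;
         lo = (\<lambda>t. ereal (util_br2 M (emp_freq ii t)));
         hi = (\<lambda>t. ereal (util_br1 M (emp_freq jj t)))
     in ereal (v - (c + 1) * \<epsilon>) \<le> liminf g \<and> liminf g \<le> limsup g
        \<and> limsup g \<le> ereal (v + (c + 1) * \<epsilon>)
        \<and> ereal (v - 2 * (c + 1) * \<epsilon>) \<le> liminf lo \<and> liminf lo \<le> limsup hi
        \<and> limsup hi \<le> ereal (v + 2 * (c + 1) * \<epsilon>))"
proof -
  define v where "v = game_value M"
  define g where "g t = avg_payoff a ii jj t" for t
  define lo where "lo t = util_br2 M (emp_freq ii t)" for t
  define hi where "hi t = util_br1 M (emp_freq jj t)" for t
  define r1 where "r1 t = regret1 a ii jj t" for t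
  define r2 where "r2 t = regret2 a ii jj t" for t
  define r where "r t = real K / real t" for t
  have d: "0 \<le> c * \<epsilon>" using c0 e0 by simp
  have A: "hi t \<le> r1 t + g t + c * \<epsilon> + r t" if "t \<ge> 1" for t
    unfolding hi_def r1_def g_def r_def by (rule bound_hi[OF M ar d K that])
  have B: "g t \<le> r2 t + lo t + c * \<epsilon> + r t" if "t \<ge> 1" for t
    unfolding lo_def r2_def g_def r_def by (rule bound_lo[OF M ar d K that])
  have L: "lo t \<le> v" if "t \<ge> 1" for t
    unfolding lo_def v_def by (rule br2_le_value[OF M emp_freq_mixed[OF that]])
  have H: "v \<le> hi t" if "t \<ge> 1" for t
    unfolding hi_def v_def by (rule value_le_br1[OF M emp_freq_mixed[OF that]])
  have ev1: "eventually (\<lambda>t. t \<ge> (1::nat)) sequentially" by (rule eventually_ge_at_top)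
  have rlim: "r \<longlonglongrightarrow> 0" unfolding r_def by (rule lim_const_over_n)
  have r2lim: "(\<lambda>t. 2 * r t) \<longlonglongrightarrow> 0" using tendsto_mult_right_zero[OF rlim, of 2] by (simp add: mult.commute)
  have z: "limsup (\<lambda>t. ereal ((\<lambda>_. 0::real) t)) \<le> ereal 0" by (simp add: Limsup_const)
  have h1': "limsup (\<lambda>t. ereal (r1 t)) \<le> ereal \<epsilon>" using h1 unfolding r1_def .
  have h2': "limsup (\<lambda>t. ereal (r2 t)) \<le> ereal \<epsilon>" using h2 unfolding r2_def .
  have G1: "ereal (v - c * \<epsilon> - \<epsilon> - 0) \<le> liminf (\<lambda>t. ereal (g t))"
  proof (rule liminf_bound[OF h1' z rlim])
    show "eventually (\<lambda>t. v - c * \<epsilon> - r1 t - 0 - r t \<le> g t) sequentially"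
      using ev1 by eventually_elim (use A H in fastforce)
  qed
  have G2: "limsup (\<lambda>t. ereal (g t)) \<le> ereal (v + c * \<epsilon> + \<epsilon> + 0)"
  proof (rule limsup_bound[OF h2' z rlim])
    show "eventually (\<lambda>t. g t \<le> v + c * \<epsilon> + r2 t + 0 + r t) sequentially"
      using ev1 by eventually_elim (use B L in fastforce)
  qed
  have LO: "ereal (v - 2 * c * \<epsilon> - \<epsilon> - \<epsilon>) \<le> liminf (\<lambda>t. ereal (lo t))"
  proof (rule liminf_bound[OF h1' h2' r2lim])
    show "eventually (\<lambda>t. v - 2 * c * \<epsilon> - r1 t - r2 t - 2 * r t \<le> lo t) sequentially"
      using ev1 by eventually_elim (use A B H in fastforce)
  qed
  have HI: "limsup (\<lambda>t. ereal (hi t)) \<le> ereal (v + 2 * c * \<epsilon> + \<epsilon> + \<epsilon>)"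
  proof (rule limsup_bound[OF h1' h2' r2lim])
    show "eventually (\<lambda>t. hi t \<le> v + 2 * c * \<epsilon> + r1 t + r2 t + 2 * r t) sequentially"
      using ev1 by eventually_elim (use A B L in fastforce)
  qed
  have M1: "liminf (\<lambda>t. ereal (lo t)) \<le> ereal v"
  proof -
    have "liminf (\<lambda>t. ereal (lo t)) \<le> liminf (\<lambda>t. ereal v)"
      by (rule Liminf_mono) (use ev1 in \<open>eventually_elim, use L in simp\<close>)
    then show ?thesis by (simp add: Liminf_const)
  qed
  have M2: "ereal v \<le> limsup (\<lambda>t. ereal (hi t))"
  proof -
    have "limsup (\<lambda>t. ereal v) \<le> limsup (\<lambda>t. ereal (hi t))"
      by (rule Limsup_mono) (use ev1 in \<open>eventually_elim, use H in simp\<close>)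
    then show ?thesis by (simp add: Limsup_const)
  qed
  have GG: "liminf (\<lambda>t. ereal (g t)) \<le> limsup (\<lambda>t. ereal (g t))"
    by (rule Liminf_le_Limsup) simp
  have q1: "v - (c + 1) * \<epsilon> = v - c * \<epsilon> - \<epsilon> - 0" by (simp add: algebra_simps)
  have q2: "v + (c + 1) * \<epsilon> = v + c * \<epsilon> + \<epsilon> + 0" by (simp add: algebra_simps)
  have q3: "v - 2 * (c + 1) * \<epsilon> = v - 2 * c * \<epsilon> - \<epsilon> - \<epsilon>" by (simp add: algebra_simps)
  have q4: "v + 2 * (c + 1) * \<epsilon> = v + 2 * c * \<epsilon> + \<epsilon> + \<epsilon>" by (simp add: algebra_simps)
  show ?thesis
    unfolding Let_def v_def[symmetric] g_def[symmetric] lo_def[symmetric] hi_def[symmetric] q1 q2 q3 q4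
    using G1 G2 LO HI M1 M2 GG by (meson order_trans)
qed

theorem proposition1:
  fixes P :: "'w measure"
    and M :: "'r::finite \<Rightarrow> 'c::finite \<Rightarrow> real"
    and A :: "nat \<Rightarrow> 'w \<Rightarrow> 'r \<Rightarrow> 'c \<Rightarrow> real"
    and I :: "nat \<Rightarrow> 'w \<Rightarrow> 'r"
    and J :: "nat \<Rightarrow> 'w \<Rightarrow> 'c"
    and \<epsilon> c :: real
  assumes "prob_space P"
    and M_range: "\<And>i j. 0 \<le> M i j \<and> M i j \<le> 1"
    and A_range: "\<And>t \<omega> i j. 0 \<le> A t \<omega> i j \<and> A t \<omega> i j \<le> 1"
    and "0 \<le> \<epsilon>" and "0 \<le> c"
    and error: "AE \<omega> in P. \<exists>t0. \<forall>t\<ge>t0. \<forall>i j. \<bar>A t \<omega> i j - M i j\<bar> < c * \<epsilon>"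
    and hannan1: "AE \<omega> in P.
       limsup (\<lambda>t. ereal (regret1 (\<lambda>s. A s \<omega>) (\<lambda>s. I s \<omega>) (\<lambda>s. J s \<omega>) t)) \<le> ereal \<epsilon>"
    and hannan2: "AE \<omega> in P.
       limsup (\<lambda>t. ereal (regret2 (\<lambda>s. A s \<omega>) (\<lambda>s. I s \<omega>) (\<lambda>s. J s \<omega>) t)) \<le> ereal \<epsilon>"
  shows "AE \<omega> in P.
    (let g = (\<lambda>t. ereal (avg_payoff (\<lambda>s. A s \<omega>) (\<lambda>s. I s \<omega>) (\<lambda>s. J s \<omega>) t));
         v = game_value M;
         lo = (\<lambda>t. ereal (util_br2 M (emp_freq (\<lambda>s. I s \<omega>) t)));
         hi = (\<lambda>t. ereal (util_br1 M (emp_freq (\<lambda>s. J s \<omega>) t)))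
     in ereal (v - (c + 1) * \<epsilon>) \<le> liminf g \<and> liminf g \<le> limsup g
        \<and> limsup g \<le> ereal (v + (c + 1) * \<epsilon>)
        \<and> ereal (v - 2 * (c + 1) * \<epsilon>) \<le> liminf lo \<and> liminf lo \<le> limsup hi
        \<and> limsup hi \<le> ereal (v + 2 * (c + 1) * \<epsilon>))"
  proof -
  have Mr: "\<forall>i j. 0 \<le> M i j \<and> M i j \<le> 1" using M_range by blast
  have e0: "0 \<le> \<epsilon>" and c0: "0 \<le> c" by fact+
  show ?thesis using error hannan1 hannan2
  proof eventually_elim
    case (elim \<omega>)
    then obtain t0 where t0: "\<forall>t\<ge>t0. \<forall>i j. \<bar>A t \<omega> i j - M i j\<bar> < c * \<epsilon>" by blast
    have ar: "\<forall>t i j. 0 \<le> A t \<omega> i j \<and> A t \<omega> i j \<le> 1" using A_range by blast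
    show ?case
      by (rule det[where a="\<lambda>s. A s \<omega>" and ii="\<lambda>s. I s \<omega>" and jj="\<lambda>s. J s \<omega>" and K=t0,
            OF Mr ar e0 c0 t0 elim(2) elim(3)])
  qed
qed

end
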